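(* For every $\kappa\in(0,1)$ the function $H_\kappa$ is smooth and $$H_\kappa(x)=1+\frac{x^2}{2(1-\kappa)^2}+o\Big(\frac{x^2}{(1-\kappa)^2}\Big)\quad(x\to0),\qquad H_\kappa(x)=x+\kappa\ln x+\kappa^2\frac{\ln x}{x}+\mathcal O(1)\quad(x\to\infty).$$
   Context: For $\kappa\in(0,1)$ let $G_\kappa:[1,\infty)\to[0,\infty)$, $G_\kappa(x)=\sqrt{x^2-1}-\kappa\ln(x+\sqrt{x^2-1})$, which is a strictly increasing bijection, and $H_\kappa=G_\kappa^{-1}:[0,\infty)\to[1,\infty)$. *)

theory Defs
  imports "HOL-Analysis.Analysis" "HOL-Library.Landau_Symbols"
begin

definition G :: "real \<Rightarrow> real \<Rightarrow> real" where
  "G \<kappa> x = sqrt (x\<^sup>2 - 1) - \<kappa> * ln (x + sqrt (x\<^sup>2 - 1))"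

text \<open>H kappa is the inverse of G kappa restricted to [1,oo); it is meaningful on [0,oo).\<close>
definition H :: "real \<Rightarrow> real \<Rightarrow> real" where
  "H \<kappa> = inv_into {1..} (G \<kappa>)"

end

theory Submission
  imports Defs "HOL-Real_Asymp.Real_Asymp"
begin

definition gk :: "real \<Rightarrow> real \<Rightarrow> real" where
  "gk k t = sinh t - k * t"

definition hk :: "real \<Rightarrow> real \<Rightarrow> real" where
  "hk k y = (THE t. gk k t = y)"

lemma gk_deriv: "(gk k has_real_derivative (cosh t - k)) (at t)"
  unfolding gk_def by (auto intro!: derivative_eq_intros)

lemma gk_cont: "isCont (gk k) t"
  using gk_deriv DERIV_isCont by blast

lemma cosh_minus_pos: "k < 1 \<Longrightarrow> cosh (t::real) - k > 0"
  using cosh_real_ge_1[of t] by linarith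

lemma gk_less: assumes "k < 1" "a < b" shows "gk k a < gk k b"
  using assms(2) by (rule DERIV_pos_imp_increasing) (use gk_deriv cosh_minus_pos[OF assms(1)] in blast)

lemma gk_less_iff: "k < 1 \<Longrightarrow> gk k a < gk k b \<longleftrightarrow> a < b"
  by (metis gk_less linorder_neqE_linordered_idom order_less_asym)

lemma gk_inj: "k < 1 \<Longrightarrow> gk k a = gk k b \<longleftrightarrow> a = b"
  by (metis gk_less linorder_neqE_linordered_idom order_less_irrefl)

lemma gk_odd: "gk k (-t) = - gk k t"
  unfolding gk_def by simp

lemma gk_0 [simp]: "gk k 0 = 0"
  unfolding gk_def by simp

lemma sinh_ge_self: assumes "0 \<le> (s::real)" shows "s \<le> sinh s"
proof -
  have "(\<lambda>x. sinh x - x) 0 \<le> (\<lambda>x. sinh x - x) s"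
  proof (rule DERIV_nonneg_imp_nondecreasing[OF assms])
    fix x :: real
    show "\<exists>y. ((\<lambda>x. sinh x - x) has_real_derivative y) (at x) \<and> 0 \<le> y"
      using cosh_real_ge_1[of x] by (intro exI[of _ "cosh x - 1"]) (auto intro!: derivative_eq_intros)
  qed
  then show ?thesis by simp
qed

lemma gk_surj_nonneg: assumes "k < 1" "0 \<le> y" shows "\<exists>t. gk k t = y"
proof -
  have "gk k 0 \<le> y" using assms by simp
  moreover have "y \<le> gk k (y / (1 - k))"
  proof -
    have "y / (1 - k) \<le> sinh (y / (1-k))" using assms by (intro sinh_ge_self) auto
    then have "y / (1 - k) - k * (y/(1-k)) \<le> gk k (y / (1 - k))" unfolding gk_def by simp
    moreover have "y / (1 - k) - k * (y/(1-k)) = (1 - k) * (y / (1 - k))" by algebra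
    moreover have "(1 - k) * (y / (1 - k)) = y" using assms by simp
    ultimately show ?thesis by simp
  qed
  ultimately show ?thesis using IVT[of "gk k" 0 y "y/(1-k)"] assms gk_cont by auto
qed

lemma gk_surj: assumes "k < 1" shows "\<exists>t. gk k t = y"
proof (cases "0 \<le> y")
  case True then show ?thesis using gk_surj_nonneg assms by blast
next
  case False
  then obtain t where "gk k t = -y" using gk_surj_nonneg[of k "-y"] assms by auto
  then have "gk k (-t) = y" by (simp add: gk_odd)
  then show ?thesis by blast
qed

lemma gk_hk: assumes "k < 1" shows "gk k (hk k y) = y"
proof -
  obtain t where t: "gk k t = y" using gk_surj assms by blast
  have "(THE t. gk k t = y) = t" using t gk_inj[OF assms] by blast
  then show ?thesis unfolding hk_def using t by simp
qed

lemma hk_gk: assumes "k < 1" shows "hk k (gk k t) = t"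
  using gk_hk[OF assms, of "gk k t"] gk_inj[OF assms] by blast

lemma hk_cont: assumes "k < 1" shows "isCont (hk k) y"
proof -
  have "isCont (hk k) (gk k (hk k y))"
    by (rule isCont_inverse_function[where d=1]) (auto simp: hk_gk[OF assms] gk_cont)
  then show ?thesis by (simp add: gk_hk[OF assms])
qed

lemma hk_deriv: assumes "k < 1"
  shows "(hk k has_real_derivative (1 / (cosh (hk k y) - k))) (at y)"
proof -
  have "(hk k has_real_derivative inverse (cosh (hk k y) - k)) (at y)"
  proof (rule DERIV_inverse_function[where f="gk k" and a="y - 1" and b="y + 1"])
    show "cosh (hk k y) - k \<noteq> 0" using cosh_minus_pos[OF assms, of "hk k y"] by linarith
  qed (use gk_deriv gk_hk[OF assms] hk_cont[OF assms] in \<open>auto\<close>)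
  then show ?thesis by (simp add: divide_inverse)
qed

lemma hk_nonneg: assumes "k < 1" "0 \<le> y" shows "0 \<le> hk k y"
  using gk_less_iff[OF assms(1), of "hk k y" 0] gk_hk[OF assms(1)] assms(2) by auto

lemma hk_pos: assumes "k < 1" "0 < y" shows "0 < hk k y"
  using gk_less_iff[OF assms(1), of 0 "hk k y"] gk_hk[OF assms(1)] assms(2) by auto

lemma G_cosh: assumes "0 \<le> t" shows "G k (cosh t) = gk k t"
proof -
  have "sqrt ((cosh t)\<^sup>2 - 1) = sinh t"
    using assms by (metis arcosh_cosh_real cosh_real_ge_1 sinh_arcosh_real)
  moreover have "ln (cosh t + sinh t) = t" by (simp add: cosh_plus_sinh)
  ultimately show ?thesis unfolding G_def gk_def by simp
qed

lemma H_eq: assumes "k < 1" "0 \<le> y" shows "H k y = cosh (hk k y)"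
proof -
  have inj: "inj_on (G k) {1..}"
  proof
    fix a b assume ab: "a \<in> {1..}" "b \<in> {1..}" "G k a = G k b"
    have "G k a = gk k (arcosh a)" using G_cosh[of "arcosh a" k] ab by simp
    moreover have "G k b = gk k (arcosh b)" using G_cosh[of "arcosh b" k] ab by simp
    ultimately have "arcosh a = arcosh b" using ab gk_inj[OF assms(1)] by simp
    then show "a = b" using ab by (metis atLeast_iff cosh_arcosh_real)
  qed
  show ?thesis unfolding H_def
    apply (rule inv_into_f_eq[OF inj])
    using cosh_real_ge_1 G_cosh[OF hk_nonneg[OF assms]] gk_hk[OF assms(1)] by auto
qed

inductive_set SA :: "real \<Rightarrow> (real \<Rightarrow> real) set" for k where
  SA_const: "(\<lambda>t. c) \<in> SA k"
| SA_cosh: "cosh \<in> SA k"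
| SA_sinh: "sinh \<in> SA k"
| SA_W: "(\<lambda>t. 1 / (cosh t - k)) \<in> SA k"
| SA_add: "f \<in> SA k \<Longrightarrow> g \<in> SA k \<Longrightarrow> (\<lambda>t. f t + g t) \<in> SA k"
| SA_mult: "f \<in> SA k \<Longrightarrow> g \<in> SA k \<Longrightarrow> (\<lambda>t. f t * g t) \<in> SA k"

lemma SA_deriv: assumes "k < 1" "f \<in> SA k"
  shows "\<exists>f'\<in>SA k. \<forall>t. (f has_real_derivative f' t) (at t)"
  using assms(2)
proof induction
  case (SA_const c)
  then show ?case by (intro bexI[of _ "\<lambda>t. 0"]) (auto intro: SA.intros)
next
  case SA_cosh
  then show ?case by (intro bexI[of _ "sinh"]) (auto intro: SA.intros derivative_eq_intros)
next
  case SA_sinh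
  then show ?case by (intro bexI[of _ "cosh"]) (auto intro: SA.intros derivative_eq_intros)
next
  case SA_W
  let ?W = "\<lambda>t. 1 / (cosh t - k)"
  have "(\<lambda>t. (\<lambda>t. -1) t * (\<lambda>t. sinh t * (?W t * ?W t)) t) \<in> SA k"
    by (intro SA.intros)
  moreover have "\<forall>t. (?W has_real_derivative (-1) * (sinh t * (?W t * ?W t))) (at t)"
  proof
    fix t
    have ne: "cosh t - k \<noteq> 0" using cosh_minus_pos[OF assms(1)] by (metis less_irrefl)
    show "(?W has_real_derivative (-1) * (sinh t * (?W t * ?W t))) (at t)"
      by (rule derivative_eq_intros refl | use ne in \<open>simp add: field_simps power2_eq_square\<close>)+
  qed
  ultimately show ?case by (intro bexI[of _ "\<lambda>t. (\<lambda>t. -1) t * (\<lambda>t. sinh t * (?W t * ?W t)) t"]) auto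
next
  case (SA_add f g)
  then obtain f' g' where "f' \<in> SA k" "g' \<in> SA k" "\<forall>t. (f has_real_derivative f' t) (at t)"
    "\<forall>t. (g has_real_derivative g' t) (at t)" by blast
  then show ?case by (intro bexI[of _ "\<lambda>t. f' t + g' t"]) (auto intro: SA.intros derivative_eq_intros)
next
  case (SA_mult f g)
  then obtain f' g' where "f' \<in> SA k" "g' \<in> SA k" "\<forall>t. (f has_real_derivative f' t) (at t)"
    "\<forall>t. (g has_real_derivative g' t) (at t)" by blast
  note f'g' = this
  show ?case
  proof (intro bexI[of _ "\<lambda>t. f' t * g t + f t * g' t"] allI)
    fix t
    show "((\<lambda>t. f t * g t) has_real_derivative f' t * g t + f t * g' t) (at t)"
    proof -
      have "((\<lambda>t. f t * g t) has_real_derivative f' t * g t + g' t * f t) (at t)"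
        by (rule DERIV_mult) (use f'g' in auto)
      then show ?thesis by (simp add: mult.commute)
    qed
  next
    show "(\<lambda>t. f' t * g t + f t * g' t) \<in> SA k"
    proof -
      have fS: "f \<in> SA k" and gS: "g \<in> SA k" using SA_mult.hyps by blast+
      show ?thesis using SA.SA_add[OF SA.SA_mult[OF f'g'(1) gS] SA.SA_mult[OF fS f'g'(2)]] by simp
    qed
  qed
qed

definition dfk :: "real \<Rightarrow> (real \<Rightarrow> real) \<Rightarrow> real \<Rightarrow> real" where
  "dfk k f = (SOME f'. f' \<in> SA k \<and> (\<forall>t. (f has_real_derivative f' t) (at t)))"

lemma dfk: assumes "k < 1" "f \<in> SA k"
  shows "dfk k f \<in> SA k" "(f has_real_derivative dfk k f t) (at t)"
proof -
  have "\<exists>f'. f' \<in> SA k \<and> (\<forall>t. (f has_real_derivative f' t) (at t))"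
    using SA_deriv[OF assms] by blast
  from someI_ex[OF this] show "dfk k f \<in> SA k" "(f has_real_derivative dfk k f t) (at t)"
    unfolding dfk_def by auto
qed

primrec Ek :: "real \<Rightarrow> nat \<Rightarrow> real \<Rightarrow> real" where
  "Ek k 0 = cosh"
| "Ek k (Suc n) = (\<lambda>t. dfk k (Ek k n) t * (1 / (cosh t - k)))"

lemma Ek_SA: assumes "k < 1" shows "Ek k n \<in> SA k"
proof (induction n)
  case (Suc n)
  show ?case by (simp only: Ek.simps) (rule SA_mult[OF dfk(1)[OF assms Suc.IH] SA_W])
qed (auto intro: SA.intros)

lemma Ek_deriv: assumes "k < 1"
  shows "((\<lambda>y. Ek k n (hk k y)) has_real_derivative Ek k (Suc n) (hk k y)) (at y)"
  using DERIV_chain2[OF dfk(2)[OF assms Ek_SA[OF assms]] hk_deriv[OF assms]] by simp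

theorem lemma2p10:
  fixes \<kappa> :: real
  assumes "0 < \<kappa>" and "\<kappa> < 1"
  shows "(\<exists>D :: nat \<Rightarrow> real \<Rightarrow> real. D 0 = H \<kappa> \<and>
            (\<forall>n. \<forall>x\<ge>0. (D n has_real_derivative D (Suc n) x) (at x within {0..})))
     \<and> (\<lambda>x. H \<kappa> x - 1 - x\<^sup>2 / (2 * (1 - \<kappa>)\<^sup>2)) \<in> o[at_right 0](\<lambda>x. x\<^sup>2 / (1 - \<kappa>)\<^sup>2)
     \<and> (\<lambda>x. H \<kappa> x - x - \<kappa> * ln x - \<kappa>\<^sup>2 * ln x / x) \<in> O[at_top](\<lambda>_. 1)"
proof (intro conjI)
  let ?k = \<kappa>
  define D where "D n = (if n = 0 then H ?k else (\<lambda>y. Ek ?k n (hk ?k y)))" for n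
  show "\<exists>D :: nat \<Rightarrow> real \<Rightarrow> real. D 0 = H \<kappa> \<and>
            (\<forall>n. \<forall>x\<ge>0. (D n has_real_derivative D (Suc n) x) (at x within {0..}))"
  proof (intro exI[of _ D] conjI allI impI)
    show "D 0 = H ?k" by (simp add: D_def)
    fix n and x :: real assume x: "0 \<le> x"
    have d: "((\<lambda>y. Ek ?k n (hk ?k y)) has_real_derivative D (Suc n) x) (at x within {0..})"
      using Ek_deriv[OF assms(2), of n x] unfolding D_def
      by (auto intro: has_field_derivative_at_within)
    show "(D n has_real_derivative D (Suc n) x) (at x within {0..})"
    proof (cases "n = 0")
      case True
      show ?thesis
        by (rule has_field_derivative_transform_within[OF d zero_less_one])
           (use x True in \<open>auto simp: D_def H_eq[OF assms(2)]\<close>)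
    next
      case False then show ?thesis using d by (simp add: D_def)
    qed
  qed
next
  let ?k = \<kappa>
  have A: "(\<lambda>t. cosh t - 1 - (sinh t - ?k*t)\<^sup>2 / (2 * (1 - ?k)\<^sup>2)) \<in> o[at_right 0](\<lambda>t. (sinh t - ?k*t)\<^sup>2 / (1 - ?k)\<^sup>2)"
    using assms by real_asymp
  have lim: "filterlim (hk ?k) (at_right 0) (at_right 0)"
  proof -
    have "(hk ?k \<longlongrightarrow> hk ?k 0) (at_right 0)"
      using hk_cont[OF assms(2)] by (simp add: isCont_def filterlim_at_split)
    moreover have "hk ?k 0 = 0" using hk_gk[OF assms(2), of 0] by simp
    moreover have "eventually (\<lambda>y. hk ?k y \<in> {0<..}) (at_right 0)"
      using hk_pos[OF assms(2)] eventually_at_right_less[of 0] by (auto elim: eventually_mono)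
    moreover have "eventually (\<lambda>y. hk ?k y \<in> {0<..} \<and> hk ?k y \<noteq> 0) (at_right 0)"
      using calculation(3) by (rule eventually_mono) auto
    ultimately show ?thesis unfolding filterlim_at by simp
  qed
  have "(\<lambda>y. cosh (hk ?k y) - 1 - (gk ?k (hk ?k y))\<^sup>2 / (2 * (1 - ?k)\<^sup>2))
        \<in> o[at_right 0](\<lambda>y. (gk ?k (hk ?k y))\<^sup>2 / (1 - ?k)\<^sup>2)"
    using landau_o.small.compose[OF A lim] unfolding gk_def by (simp add: o_def)
  then have h1: "(\<lambda>y. cosh (hk ?k y) - 1 - y\<^sup>2 / (2 * (1 - ?k)\<^sup>2))
        \<in> o[at_right 0](\<lambda>y. y\<^sup>2 / (1 - ?k)\<^sup>2)"
    by (simp add: gk_hk[OF assms(2)])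
  have ev: "eventually (\<lambda>y. cosh (hk ?k y) - 1 - y\<^sup>2 / (2 * (1 - ?k)\<^sup>2) =
        H ?k y - 1 - y\<^sup>2 / (2 * (1 - ?k)\<^sup>2)) (at_right 0)"
    using eventually_at_right_less[of "0::real"] by (rule eventually_mono) (simp add: H_eq[OF assms(2)])
  show "(\<lambda>x. H \<kappa> x - 1 - x\<^sup>2 / (2 * (1 - \<kappa>)\<^sup>2)) \<in> o[at_right 0](\<lambda>x. x\<^sup>2 / (1 - \<kappa>)\<^sup>2)"
    using h1 landau_o.small.in_cong[OF ev] by simp
next
  let ?k = \<kappa>
  have B: "(\<lambda>t. cosh t - (sinh t - ?k*t) - ?k * ln (sinh t - ?k*t) - ?k\<^sup>2 * ln (sinh t - ?k*t) / (sinh t - ?k*t)) \<in> O[at_top](\<lambda>_. 1)"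
    using assms by real_asymp
  have lim: "filterlim (hk ?k) at_top at_top"
    unfolding filterlim_at_top
  proof
    fix Z
    show "eventually (\<lambda>y. Z \<le> hk ?k y) at_top"
      using eventually_ge_at_top[of "gk ?k Z"]
    proof (rule eventually_mono)
      fix y assume "gk ?k Z \<le> y"
      then show "Z \<le> hk ?k y"
        using gk_less_iff[OF assms(2), of "hk ?k y" Z] gk_hk[OF assms(2), of y] by auto
    qed
  qed
  have "(\<lambda>y. cosh (hk ?k y) - gk ?k (hk ?k y) - ?k * ln (gk ?k (hk ?k y)) - ?k\<^sup>2 * ln (gk ?k (hk ?k y)) / gk ?k (hk ?k y))
        \<in> O[at_top](\<lambda>_. 1)"
    using landau_o.big.compose[OF B lim] unfolding gk_def by (simp add: o_def)
  then have h1: "(\<lambda>y. cosh (hk ?k y) - y - ?k * ln y - ?k\<^sup>2 * ln y / y) \<in> O[at_top](\<lambda>_. 1)"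
    by (simp add: gk_hk[OF assms(2)])
  have ev: "eventually (\<lambda>y. cosh (hk ?k y) - y - ?k * ln y - ?k\<^sup>2 * ln y / y =
        H ?k y - y - ?k * ln y - ?k\<^sup>2 * ln y / y) at_top"
    using eventually_ge_at_top[of "0::real"] by (rule eventually_mono) (simp add: H_eq[OF assms(2)])
  show "(\<lambda>x. H \<kappa> x - x - \<kappa> * ln x - \<kappa>\<^sup>2 * ln x / x) \<in> O[at_top](\<lambda>_. 1)"
    using h1 landau_o.big.in_cong[OF ev] by simp
qed

end
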